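(* Consider the second-stage problem defined in the context, and suppose all its right-hand-side data are integers: the initial fill levels $d_i^0$, capacities $\overline{d}_i$, demands $f_{i,j}^{t,k}(\xi)$, prescribed in-progress journeys $w_{i,j}^{t,k}$ ($1-K\le t\le 0$), and load/unload actions $y_i^{+,t},y_i^{-,t}$. Then, even when the integrality constraint on $w$ is relaxed (so $w$ is real-valued), the resulting linear program, if feasible, has an integer-valued optimal solution.
   Context: Setting: a directed graph $\mathcal{G}_\text{SV}=(\mathcal{N}_\text{SV},\mathcal{E}_\text{SV})$ of possible shared-vehicle (SV) journeys, horizon $T$, maximum journey duration $K$, station capacities $\overline{d}_i$, initial fill levels $d_i^0$, and given load/unload actions $y_i^{+,t},y_i^{-,t}$ for $i\in\mathcal{N}_\text{SV}$, $t=1,\dots,T$ (zero at nodes where no action is defined). For a realization $\xi$, $f_{i,j}^{t,k}(\xi)\in\mathbb{N}$ is the demand for journeys from $i$ to $j$ starting at time $t$ with duration $k$, and $l_{i,j}^{t,k}(\cdot;\xi)$ is a convex piecewise affine function passing through the origin with breakpoints at the integers. The second-stage problem is $$V(y,\xi):=\min_w\ \sum_{t=1}^T\sum_{(i,j)\in\mathcal{E}_\text{SV}}\sum_{k=0}^K l_{i,j}^{t,k}(f_{i,j}^{t,k}(\xi)-w_{i,j}^{t,k};\xi)$$ subject to, for all $t=1,\dots,T$ and $i\in\mathcal{N}_\text{SV}$, $$0\le d_i^0+\sum_{\tau=1}^t\Big[\sum_{k=0}^K\Big(\sum_{(j,i)\in\mathcal{E}_\text{SV}}w_{j,i}^{\tau-k,k}-\sum_{(i,j)\in\mathcal{E}_\text{SV}}w_{i,j}^{\tau,k}\Big)+y_i^{-,\tau}-y_i^{+,\tau}\Big]\le\overline{d}_i,$$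 $0\le w_{i,j}^{t,k}\le f_{i,j}^{t,k}(\xi)$ for $t=1,\dots,T$, $k=0,\dots,K$, $(i,j)\in\mathcal{E}_\text{SV}$, with $w_{i,j}^{t,k}$ given (fixed data) for $1-K\le t\le 0$, $-t<k\le K$, and $w_{i,j}^{t,k}\in\mathbb{Z}$. *)

theory Defs
  imports "HOL-Analysis.Analysis"
begin

definition cvx_pwa_int :: "(real \<Rightarrow> real) \<Rightarrow> bool" where
  "cvx_pwa_int l \<longleftrightarrow> l 0 = 0 \<and> convex_on UNIV l \<and>
     (\<forall>n::int. \<forall>x. real_of_int n \<le> x \<and> x \<le> real_of_int n + 1 \<longrightarrow>
        l x = l (real_of_int n) + (x - real_of_int n) * (l (real_of_int n + 1) - l (real_of_int n)))"

definition journey :: "(int \<Rightarrow> nat \<Rightarrow> 'n \<times> 'n \<Rightarrow> int) \<Rightarrow> (int \<Rightarrow> nat \<Rightarrow> 'n \<times> 'n \<Rightarrow> real)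
     \<Rightarrow> int \<Rightarrow> nat \<Rightarrow> 'n \<times> 'n \<Rightarrow> real" where
  "journey w0 w t k e = (if t \<le> 0 then real_of_int (w0 t k e) else w t k e)"

definition fill_level ::
  "('n \<times> 'n) set \<Rightarrow> nat \<Rightarrow> ('n \<Rightarrow> int) \<Rightarrow> ('n \<Rightarrow> int \<Rightarrow> int) \<Rightarrow> ('n \<Rightarrow> int \<Rightarrow> int)
   \<Rightarrow> (int \<Rightarrow> nat \<Rightarrow> 'n \<times> 'n \<Rightarrow> int) \<Rightarrow> (int \<Rightarrow> nat \<Rightarrow> 'n \<times> 'n \<Rightarrow> real) \<Rightarrow> 'n \<Rightarrow> int \<Rightarrow> real" where
  "fill_level E K d0 yplus yminus w0 w i t =
     real_of_int (d0 i) +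
     (\<Sum>\<tau>\<in>{1..t}.
        (\<Sum>k\<in>{0..K}.
            (\<Sum>j\<in>{j. (j, i) \<in> E}. journey w0 w (\<tau> - int k) k (j, i))
          - (\<Sum>j\<in>{j. (i, j) \<in> E}. w \<tau> k (i, j)))
        + real_of_int (yminus i \<tau>) - real_of_int (yplus i \<tau>))"

definition feasible_relaxed ::
  "'n set \<Rightarrow> ('n \<times> 'n) set \<Rightarrow> nat \<Rightarrow> nat \<Rightarrow> ('n \<Rightarrow> int) \<Rightarrow> ('n \<Rightarrow> int)
   \<Rightarrow> ('n \<Rightarrow> int \<Rightarrow> int) \<Rightarrow> ('n \<Rightarrow> int \<Rightarrow> int) \<Rightarrow> (int \<Rightarrow> nat \<Rightarrow> 'n \<times> 'n \<Rightarrow> nat)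
   \<Rightarrow> (int \<Rightarrow> nat \<Rightarrow> 'n \<times> 'n \<Rightarrow> int) \<Rightarrow> (int \<Rightarrow> nat \<Rightarrow> 'n \<times> 'n \<Rightarrow> real) \<Rightarrow> bool" where
  "feasible_relaxed N E T K d0 dbar yplus yminus f w0 w \<longleftrightarrow>
     (\<forall>t\<in>{1..int T}. \<forall>i\<in>N.
        0 \<le> fill_level E K d0 yplus yminus w0 w i t \<and>
        fill_level E K d0 yplus yminus w0 w i t \<le> real_of_int (dbar i)) \<and>
     (\<forall>t\<in>{1..int T}. \<forall>k\<in>{0..K}. \<forall>e\<in>E. 0 \<le> w t k e \<and> w t k e \<le> real (f t k e))"

definition objective ::
  "('n \<times> 'n) set \<Rightarrow> nat \<Rightarrow> nat \<Rightarrow> (int \<Rightarrow> nat \<Rightarrow> 'n \<times> 'n \<Rightarrow> real \<Rightarrow> real)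
   \<Rightarrow> (int \<Rightarrow> nat \<Rightarrow> 'n \<times> 'n \<Rightarrow> nat) \<Rightarrow> (int \<Rightarrow> nat \<Rightarrow> 'n \<times> 'n \<Rightarrow> real) \<Rightarrow> real" where
  "objective E T K l f w =
     (\<Sum>t\<in>{1..int T}. \<Sum>e\<in>E. \<Sum>k\<in>{0..K}. l t k e (real (f t k e) - w t k e))"

end

theory Submission
  imports Defs
begin


lemma homog_solve:
  fixes M :: "'q \<Rightarrow> 'x \<Rightarrow> real"
  assumes "finite Q" "finite X" "card Q < card X"
  shows "\<exists>d. (\<forall>x. x \<notin> X \<longrightarrow> d x = 0) \<and> (\<exists>x\<in>X. d x \<noteq> 0) \<and> (\<forall>q\<in>Q. (\<Sum>x\<in>X. M q x * d x) = 0)"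
  using assms
proof (induction Q arbitrary: X M rule: finite_induct)
  case empty
  then obtain x0 where "x0 \<in> X" by (metis card.empty card_gt_0_iff ex_in_conv)
  then show ?case by (intro exI[of _ "\<lambda>x. if x = x0 then 1 else 0"]) auto
next
  case (insert q Q)
  show ?case
  proof (cases "\<forall>x\<in>X. M q x = 0")
    case True
    have "card Q < card X" using insert by simp
    from insert.IH[OF insert(4) this, of M] obtain d where
      d: "\<forall>x. x \<notin> X \<longrightarrow> d x = 0" "\<exists>x\<in>X. d x \<noteq> 0" "\<forall>q\<in>Q. (\<Sum>x\<in>X. M q x * d x) = 0" by blast
    show ?thesis using True d by (intro exI[of _ d]) auto
  next
    case False
    then obtain x0 where x0: "x0 \<in> X" "M q x0 \<noteq> 0" by auto
    define X' where "X' = X - {x0}"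
    define M' where "M' = (\<lambda>q' x. M q' x - M q' x0 * M q x / M q x0)"
    have fX': "finite X'" using insert by (simp add: X'_def)
    have "card Q < card X'" using insert x0 by (simp add: X'_def)
    from insert.IH[OF fX' this, of M'] obtain d' where
      d': "\<forall>x. x \<notin> X' \<longrightarrow> d' x = 0" "\<exists>x\<in>X'. d' x \<noteq> 0" "\<forall>q'\<in>Q. (\<Sum>x\<in>X'. M' q' x * d' x) = 0" by blast
    define S where "S = (\<Sum>x\<in>X'. M q x * d' x)"
    define d where "d = d'(x0 := - S / M q x0)"
    have split: "(\<Sum>x\<in>X. g x * d x) = g x0 * d x0 + (\<Sum>x\<in>X'. g x * d' x)" for g
    proof -
      have "(\<Sum>x\<in>X. g x * d x) = g x0 * d x0 + (\<Sum>x\<in>X'. g x * d x)"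
        unfolding X'_def using insert(4) x0(1) by (rule sum.remove)
      also have "(\<Sum>x\<in>X'. g x * d x) = (\<Sum>x\<in>X'. g x * d' x)"
        by (rule sum.cong) (auto simp: d_def X'_def)
      finally show ?thesis .
    qed
    have dx0: "d x0 = - S / M q x0" by (simp add: d_def)
    have eq_q: "(\<Sum>x\<in>X. M q x * d x) = 0"
      using x0(2) by (simp add: split dx0 S_def)
    have eq_Q: "(\<Sum>x\<in>X. M q' x * d x) = 0" if "q' \<in> Q" for q'
    proof -
      have "(\<Sum>x\<in>X'. M' q' x * d' x) = (\<Sum>x\<in>X'. M q' x * d' x) - M q' x0 / M q x0 * S"
        by (simp add: M'_def S_def algebra_simps sum_subtractf sum_distrib_left)
      then have "(\<Sum>x\<in>X'. M q' x * d' x) = M q' x0 / M q x0 * S" using d'(3) that by simp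
      then show ?thesis using x0(2) by (simp add: split dx0)
    qed
    show ?thesis
    proof (intro exI[of _ d] conjI)
      show "\<forall>x. x \<notin> X \<longrightarrow> d x = 0" using d'(1) x0 by (auto simp: d_def X'_def)
      show "\<exists>x\<in>X. d x \<noteq> 0" using d'(2) by (auto simp: d_def X'_def)
      show "\<forall>qa\<in>insert q Q. (\<Sum>x\<in>X. M qa x * d x) = 0" using eq_q eq_Q by auto
    qed
  qed
qed



definition net :: "'a set \<Rightarrow> ('a \<Rightarrow> 'v) \<Rightarrow> ('a \<Rightarrow> 'v) \<Rightarrow> ('a \<Rightarrow> real) \<Rightarrow> 'v \<Rightarrow> real" where
  "net A hh tt z v = (\<Sum>a\<in>{a\<in>A. hh a = v}. z a) - (\<Sum>a\<in>{a\<in>A. tt a = v}. z a)"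

lemma net_as_sum:
  assumes "finite F"
  shows "net F hh tt d v = (\<Sum>a\<in>F. ((if hh a = v then 1 else 0) - (if tt a = v then 1 else 0)) * d a)"
  using assms by (simp add: net_def sum.inter_filter sum_subtractf[symmetric]) (rule sum.cong, auto)

lemma card_group:
  assumes "finite F" "finite U" "g ` F \<subseteq> U"
  shows "(\<Sum>v\<in>U. card {a\<in>F. g a = v}) = card F"
  using sum.group[OF assms, of "\<lambda>_. 1::nat"] by simp

lemma circulation:
  assumes fin: "finite F" and ne: "F \<noteq> {}"
    and deg: "\<forall>v. v \<noteq> r \<longrightarrow> card {a\<in>F. hh a = v} + card {a\<in>F. tt a = v} \<noteq> 1"
  shows "\<exists>d. (\<forall>a. a \<notin> F \<longrightarrow> d a = 0) \<and> (\<exists>a\<in>F. d a \<noteq> 0) \<and> (\<forall>v. v \<noteq> r \<longrightarrow> net F hh tt d v = 0)"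
proof -
  define U where "U = hh ` F \<union> tt ` F"
  define dg where "dg v = card {a\<in>F. hh a = v} + card {a\<in>F. tt a = v}" for v
  define M where "M v a = ((if hh a = v then 1 else 0) - (if tt a = v then 1 else 0) :: real)" for v a
  have fU: "finite U" using fin by (simp add: U_def)
  have sumdg: "(\<Sum>v\<in>U. dg v) = 2 * card F"
    unfolding dg_def sum.distrib
    using card_group[OF fin fU, of hh] card_group[OF fin fU, of tt] by (simp add: U_def)
  have dg1: "dg v \<ge> 1" if "v \<in> U" for v
  proof -
    from that obtain a where "a \<in> F" "hh a = v \<or> tt a = v" unfolding U_def by auto
    then have "{a\<in>F. hh a = v} \<noteq> {} \<or> {a\<in>F. tt a = v} \<noteq> {}" by auto
    then show ?thesis using fin unfolding dg_def by (auto simp: card_gt_0_iff Suc_le_eq)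
  qed
  have dg2: "dg v \<ge> 2" if "v \<in> U" "v \<noteq> r" for v
    using dg1[OF that(1)] deg that(2) unfolding dg_def by fastforce
  have outside: "net F hh tt d v = 0" if "v \<notin> U" for d v
  proof -
    have "{a\<in>F. hh a = v} = {}" "{a\<in>F. tt a = v} = {}" using that unfolding U_def by auto
    then show ?thesis unfolding net_def by (metis sum.empty diff_self)
  qed
  have netM: "net F hh tt d v = (\<Sum>a\<in>F. M v a * d a)" for d v
    unfolding M_def by (rule net_as_sum[OF fin])
  show ?thesis
  proof (cases "r \<in> U")
    case True
    define Q where "Q = U - {r}"
    have "(\<Sum>v\<in>U. dg v) = dg r + (\<Sum>v\<in>Q. dg v)"
      unfolding Q_def using fU True by (rule sum.remove)
    moreover have "(\<Sum>v\<in>Q. dg v) \<ge> (\<Sum>v\<in>Q. 2)"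
      by (rule sum_mono) (use dg2 in \<open>auto simp: Q_def\<close>)
    moreover have "dg r \<ge> 1" using dg1 True by simp
    ultimately have "card Q < card F" using sumdg by simp
    from homog_solve[OF _ fin this, of M] fU obtain d where
      d: "\<forall>x. x \<notin> F \<longrightarrow> d x = 0" "\<exists>x\<in>F. d x \<noteq> 0" "\<forall>q\<in>Q. (\<Sum>x\<in>F. M q x * d x) = 0"
      by (auto simp: Q_def)
    show ?thesis
    proof (intro exI[of _ d] conjI allI impI)
      fix v assume "v \<noteq> r"
      then show "net F hh tt d v = 0"
        using d(3) outside[of v d] netM[of d v] by (cases "v \<in> U") (auto simp: Q_def)
    qed (use d in auto)
  next
    case False
    obtain a0 where "a0 \<in> F" using ne by auto
    define u0 where "u0 = hh a0"
    have u0U: "u0 \<in> U" using \<open>a0 \<in> F\<close> by (simp add: U_def u0_def)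
    define Q where "Q = U - {u0}"
    have "(\<Sum>v\<in>U. dg v) \<ge> (\<Sum>v\<in>U. 2)"
      by (rule sum_mono) (use dg2 False in auto)
    then have "card U \<le> card F" using sumdg by simp
    moreover have "card Q < card U" using fU u0U by (simp add: Q_def) (metis card_gt_0_iff diff_Suc_less empty_iff)
    ultimately have "card Q < card F" by simp
    from homog_solve[OF _ fin this, of M] fU obtain d where
      d: "\<forall>x. x \<notin> F \<longrightarrow> d x = 0" "\<exists>x\<in>F. d x \<noteq> 0" "\<forall>q\<in>Q. (\<Sum>x\<in>F. M q x * d x) = 0"
      by (auto simp: Q_def)
    have dQ: "net F hh tt d v = 0" if "v \<in> Q" for v using d(3) that netM by simp
    have total: "(\<Sum>v\<in>U. net F hh tt d v) = 0"
      unfolding net_def sum_subtractf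
      using sum.group[OF fin fU, of hh d] sum.group[OF fin fU, of tt d] by (simp add: U_def)
    have "(\<Sum>v\<in>U. net F hh tt d v) = net F hh tt d u0 + (\<Sum>v\<in>Q. net F hh tt d v)"
      unfolding Q_def using fU u0U by (rule sum.remove)
    then have "net F hh tt d u0 = 0" using total dQ by simp
    show ?thesis
    proof (intro exI[of _ d] conjI allI impI)
      fix v assume "v \<noteq> r"
      show "net F hh tt d v = 0"
        using dQ outside[of v d] \<open>net F hh tt d u0 = 0\<close> by (cases "v \<in> U"; cases "v = u0") (auto simp: Q_def)
    qed (use d in auto)
  qed
qed



definition affine_int :: "(real \<Rightarrow> real) \<Rightarrow> bool" where
  "affine_int c \<longleftrightarrow> (\<forall>n::int. \<forall>x y u. of_int n \<le> x \<and> x \<le> of_int n + 1 \<and> of_int n \<le> y \<and> y \<le> of_int n + 1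
      \<and> 0 \<le> u \<and> u \<le> 1 \<longrightarrow> c (u * x + (1 - u) * y) = u * c x + (1 - u) * c y)"

lemma net_lin: "finite A \<Longrightarrow> net A hh tt (\<lambda>a. x a + s * d a) v = net A hh tt x v + s * net A hh tt d v"
  by (simp add: net_def sum.distrib sum_distrib_left algebra_simps)

lemma net_supp:
  assumes "finite A" "F \<subseteq> A" "\<forall>a. a \<notin> F \<longrightarrow> d a = 0"
  shows "net A hh tt d v = net F hh tt d v"
proof -
  have "(\<Sum>a\<in>{a\<in>A. g a = v}. d a) = (\<Sum>a\<in>{a\<in>F. g a = v}. d a)" for g
    by (rule sum.mono_neutral_right) (use assms in auto)
  then show ?thesis by (simp add: net_def)
qed

lemma frac_part_int:
  assumes "finite A" "F = {a\<in>A. x a \<notin> \<int>}"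
  shows "(\<Sum>a\<in>{a\<in>A. g a = v}. x a) - (\<Sum>a\<in>{a\<in>F. g a = v}. x a) \<in> \<int>"
proof -
  have "(\<Sum>a\<in>{a\<in>A. g a = v}. x a) = (\<Sum>a\<in>{a\<in>A. g a = v} \<inter> F. x a) + (\<Sum>a\<in>{a\<in>A. g a = v} - F. x a)"
    using assms(1) by (intro sum.Int_Diff) auto
  moreover have "{a\<in>A. g a = v} \<inter> F = {a\<in>F. g a = v}" using assms by auto
  moreover have "(\<Sum>a\<in>{a\<in>A. g a = v} - F. x a) \<in> \<int>"
    using assms by (intro Ints_sum) auto
  ultimately show ?thesis by simp
qed

lemma convex_min_le:
  fixes X P Q u :: real
  assumes "X = u * P + (1 - u) * Q" "0 \<le> u" "u \<le> 1"
  shows "P \<le> X \<or> Q \<le> X"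
proof (cases "P \<le> Q")
  case True
  have "X - P = (1 - u) * (Q - P)" using assms(1) by (simp add: algebra_simps)
  moreover have "(1 - u) * (Q - P) \<ge> 0" using True assms by simp
  ultimately show ?thesis by simp
next
  case False
  have "X - Q = u * (P - Q)" using assms(1) by (simp add: algebra_simps)
  moreover have "u * (P - Q) \<ge> 0" using False assms by simp
  ultimately show ?thesis by simp
qed

lemma rounding_n:
  fixes x :: "'a \<Rightarrow> real" and lo hi :: "'a \<Rightarrow> int"
  assumes "card {a\<in>A. x a \<notin> \<int>} = n"
    and fA: "finite A"
    and bnd: "\<forall>a\<in>A. of_int (lo a) \<le> x a \<and> x a \<le> of_int (hi a)"
    and nint: "\<forall>v. v \<noteq> r \<longrightarrow> net A hh tt x v \<in> \<int>"
    and aff: "\<forall>a\<in>A. affine_int (c a)"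
  shows "\<exists>x'. (\<forall>a\<in>A. x' a \<in> \<int> \<and> of_int (lo a) \<le> x' a \<and> x' a \<le> of_int (hi a))
     \<and> (\<forall>v. v \<noteq> r \<longrightarrow> net A hh tt x' v = net A hh tt x v)
     \<and> (\<Sum>a\<in>A. c a (x' a)) \<le> (\<Sum>a\<in>A. c a (x a))"
  using assms(1) bnd nint
proof (induction n arbitrary: x rule: less_induct)
  case (less n x)
  define F where "F = {a\<in>A. x a \<notin> \<int>}"
  have fF: "finite F" using fA by (simp add: F_def)
  show ?case
  proof (cases "F = {}")
    case True
    then show ?thesis using less.prems by (intro exI[of _ x]) (auto simp: F_def)
  next
    case False
    have deg: "\<forall>v. v \<noteq> r \<longrightarrow> card {a\<in>F. hh a = v} + card {a\<in>F. tt a = v} \<noteq> 1"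
    proof (intro allI impI notI)
      fix v assume vr: "v \<noteq> r" and c1: "card {a\<in>F. hh a = v} + card {a\<in>F. tt a = v} = 1"
      have i1: "(\<Sum>a\<in>{a\<in>A. hh a = v}. x a) - (\<Sum>a\<in>{a\<in>F. hh a = v}. x a) \<in> \<int>"
        by (rule frac_part_int[OF fA F_def])
      have i2: "(\<Sum>a\<in>{a\<in>A. tt a = v}. x a) - (\<Sum>a\<in>{a\<in>F. tt a = v}. x a) \<in> \<int>"
        by (rule frac_part_int[OF fA F_def])
      have ni: "net A hh tt x v \<in> \<int>" using less.prems(3) vr by simp
      have key: "(\<Sum>a\<in>{a\<in>F. hh a = v}. x a) - (\<Sum>a\<in>{a\<in>F. tt a = v}. x a) \<in> \<int>"
      proof -
        have "(\<Sum>a\<in>{a\<in>F. hh a = v}. x a) - (\<Sum>a\<in>{a\<in>F. tt a = v}. x a)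
          = net A hh tt x v - ((\<Sum>a\<in>{a\<in>A. hh a = v}. x a) - (\<Sum>a\<in>{a\<in>F. hh a = v}. x a))
            + ((\<Sum>a\<in>{a\<in>A. tt a = v}. x a) - (\<Sum>a\<in>{a\<in>F. tt a = v}. x a))"
          by (simp add: net_def)
        then show ?thesis by (simp only:) (intro Ints_add Ints_diff i1 i2 ni)
      qed
      have fin1: "finite {a\<in>F. hh a = v}" "finite {a\<in>F. tt a = v}" using fF by auto
      from c1 have "(card {a\<in>F. hh a = v} = 1 \<and> card {a\<in>F. tt a = v} = 0) \<or>
                    (card {a\<in>F. hh a = v} = 0 \<and> card {a\<in>F. tt a = v} = 1)" by linarith
      then show False
      proof
        assume h: "card {a\<in>F. hh a = v} = 1 \<and> card {a\<in>F. tt a = v} = 0"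
        then obtain a0 where a0: "{a\<in>F. hh a = v} = {a0}" by (auto simp: card_1_singleton_iff)
        have e: "{a\<in>F. tt a = v} = {}" using h fin1 by simp
        have "x a0 \<in> \<int>" using key unfolding a0 e by simp
        moreover have "a0 \<in> F" using a0 by auto
        ultimately show False by (simp add: F_def)
      next
        assume h: "card {a\<in>F. hh a = v} = 0 \<and> card {a\<in>F. tt a = v} = 1"
        then obtain a0 where a0: "{a\<in>F. tt a = v} = {a0}" by (auto simp: card_1_singleton_iff)
        have e: "{a\<in>F. hh a = v} = {}" using h fin1 by simp
        have "- x a0 \<in> \<int>" using key unfolding a0 e by simp
        then have "x a0 \<in> \<int>" by (metis Ints_minus minus_minus)
        moreover have "a0 \<in> F" using a0 by auto
        ultimately show False by (simp add: F_def)
      qed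
    qed
    obtain d where d: "\<forall>a. a \<notin> F \<longrightarrow> d a = 0" "\<exists>a\<in>F. d a \<noteq> 0" "\<forall>v. v \<noteq> r \<longrightarrow> net F hh tt d v = 0"
      using circulation[OF fF False deg] by blast
    have FA: "F \<subseteq> A" by (auto simp: F_def)
    have dnet: "net A hh tt d v = 0" if "v \<noteq> r" for v
      using net_supp[OF fA FA d(1), of hh tt v] d(3) that by simp
    define G where "G = {a\<in>F. d a \<noteq> 0}"
    have fG: "finite G" "G \<noteq> {}" using fF d(2) by (auto simp: G_def)
    have frac: "of_int \<lfloor>x a\<rfloor> < x a" "x a < of_int \<lfloor>x a\<rfloor> + 1" "of_int \<lceil>x a\<rceil> = of_int \<lfloor>x a\<rfloor> + (1::real)"
      if "a \<in> F" for a
    proof -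
      have nI: "x a \<notin> \<int>" using that by (simp add: F_def)
      have ne: "x a \<noteq> of_int \<lfloor>x a\<rfloor>" using nI by (metis Ints_of_int)
      show "of_int \<lfloor>x a\<rfloor> < x a"
        using ne of_int_floor_le[of "x a"] by linarith
      show "x a < of_int \<lfloor>x a\<rfloor> + 1" by linarith
      show "of_int \<lceil>x a\<rceil> = of_int \<lfloor>x a\<rfloor> + (1::real)"
        using ne by (simp add: ceiling_altdef)
    qed

    define up where "up a = (if d a > 0 then (of_int \<lceil>x a\<rceil> - x a) / d a else (of_int \<lfloor>x a\<rfloor> - x a) / d a)" for a
    define dn where "dn a = (if d a > 0 then (x a - of_int \<lfloor>x a\<rfloor>) / d a else (x a - of_int \<lceil>x a\<rceil>) / d a)" for a
    have GF: "G \<subseteq> F" by (auto simp: G_def)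
    have up_pos: "up a > 0" if "a \<in> G" for a
    proof -
      have "a \<in> F" "d a \<noteq> 0" using that by (auto simp: G_def)
      then show ?thesis using frac[OF \<open>a \<in> F\<close>] unfolding up_def
        by (cases "d a > 0") (auto intro: divide_pos_pos divide_neg_neg)
    qed
    have dn_pos: "dn a > 0" if "a \<in> G" for a
    proof -
      have "a \<in> F" "d a \<noteq> 0" using that by (auto simp: G_def)
      then show ?thesis using frac[OF \<open>a \<in> F\<close>] unfolding dn_def
        by (cases "d a > 0") (auto intro: divide_pos_pos divide_neg_neg)
    qed
    define s1 where "s1 = Min (up ` G)"
    define s2 where "s2 = Min (dn ` G)"
    have s1: "0 < s1" "\<forall>a\<in>G. s1 \<le> up a" "\<exists>a\<in>G. s1 = up a"
    proof -
      show "\<forall>a\<in>G. s1 \<le> up a" using fG by (auto simp: s1_def)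
      have "s1 \<in> up ` G" unfolding s1_def using fG by (intro Min_in) auto
      then show "\<exists>a\<in>G. s1 = up a" by auto
      then show "0 < s1" using up_pos by auto
    qed
    have s2: "0 < s2" "\<forall>a\<in>G. s2 \<le> dn a" "\<exists>a\<in>G. s2 = dn a"
    proof -
      show "\<forall>a\<in>G. s2 \<le> dn a" using fG by (auto simp: s2_def)
      have "s2 \<in> dn ` G" unfolding s2_def using fG by (intro Min_in) auto
      then show "\<exists>a\<in>G. s2 = dn a" by auto
      then show "0 < s2" using dn_pos by auto
    qed
    define p where "p a = x a + s1 * d a" for a
    define q where "q a = x a + (- s2) * d a" for a
    have d0: "d a = 0" if "a \<notin> G" for a using that d(1) by (auto simp: G_def)
    have pbox: "of_int \<lfloor>x a\<rfloor> \<le> p a \<and> p a \<le> of_int \<lfloor>x a\<rfloor> + 1" if "a \<in> G" for a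
    proof -
      have aF: "a \<in> F" and dz: "d a \<noteq> 0" using that by (auto simp: G_def)
      note fr = frac[OF aF]
      have le: "s1 \<le> up a" using s1 that by auto
      show ?thesis
      proof (cases "d a > 0")
        case True
        then have "s1 * d a \<le> of_int \<lceil>x a\<rceil> - x a" using le by (simp add: up_def pos_le_divide_eq)
        moreover have "s1 * d a \<ge> 0" using True s1(1) by simp
        ultimately show ?thesis using fr unfolding p_def by linarith
      next
        case False
        then have neg: "d a < 0" using dz by simp
        then have "s1 * d a \<ge> of_int \<lfloor>x a\<rfloor> - x a" using le False by (simp add: up_def neg_le_divide_eq)
        moreover have "s1 * d a \<le> 0" using neg s1(1) by (simp add: mult_pos_neg less_imp_le)
        ultimately show ?thesis using fr unfolding p_def by linarith
      qed
    qed
    have qbox: "of_int \<lfloor>x a\<rfloor> \<le> q a \<and> q a \<le> of_int \<lfloor>x a\<rfloor> + 1" if "a \<in> G" for a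
    proof -
      have aF: "a \<in> F" and dz: "d a \<noteq> 0" using that by (auto simp: G_def)
      note fr = frac[OF aF]
      have le: "s2 \<le> dn a" using s2 that by auto
      show ?thesis
      proof (cases "d a > 0")
        case True
        then have "s2 * d a \<le> x a - of_int \<lfloor>x a\<rfloor>" using le by (simp add: dn_def pos_le_divide_eq)
        moreover have "s2 * d a \<ge> 0" using True s2(1) by simp
        ultimately show ?thesis using fr unfolding q_def by linarith
      next
        case False
        then have neg: "d a < 0" using dz by simp
        then have "s2 * d a \<ge> x a - of_int \<lceil>x a\<rceil>" using le False by (simp add: dn_def neg_le_divide_eq)
        moreover have "s2 * d a \<le> 0" using neg s2(1) by (simp add: mult_pos_neg less_imp_le)
        ultimately show ?thesis using fr unfolding q_def by linarith
      qed
    qed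
    have pint: "\<exists>a\<in>G. p a \<in> \<int>"
    proof -
      obtain a where a: "a \<in> G" "s1 = up a" using s1 by auto
      have dz: "d a \<noteq> 0" using a by (auto simp: G_def)
      show ?thesis
      proof (cases "d a > 0")
        case True
        then have "p a = of_int \<lceil>x a\<rceil>" using a by (simp add: p_def up_def)
        then show ?thesis using a(1) by (metis Ints_of_int)
      next
        case False
        then have "p a = of_int \<lfloor>x a\<rfloor>" using a dz by (simp add: p_def up_def)
        then show ?thesis using a(1) by (metis Ints_of_int)
      qed
    qed
    have qint: "\<exists>a\<in>G. q a \<in> \<int>"
    proof -
      obtain a where a: "a \<in> G" "s2 = dn a" using s2 by auto
      have dz: "d a \<noteq> 0" using a by (auto simp: G_def)
      show ?thesis
      proof (cases "d a > 0")
        case True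
        then have "q a = of_int \<lfloor>x a\<rfloor>" using a by (simp add: q_def dn_def)
        then show ?thesis using a(1) by (metis Ints_of_int)
      next
        case False
        then have "q a = of_int \<lceil>x a\<rceil>" using a dz by (simp add: q_def dn_def)
        then show ?thesis using a(1) by (metis Ints_of_int)
      qed
    qed
    have cand: "\<exists>x'. (\<forall>a\<in>A. x' a \<in> \<int> \<and> of_int (lo a) \<le> x' a \<and> x' a \<le> of_int (hi a))
       \<and> (\<forall>v. v \<noteq> r \<longrightarrow> net A hh tt x' v = net A hh tt x v)
       \<and> (\<Sum>a\<in>A. c a (x' a)) \<le> (\<Sum>a\<in>A. c a (y a))"
      if ydef: "y = (\<lambda>a. x a + s * d a)"
        and ybox: "\<forall>a\<in>G. of_int \<lfloor>x a\<rfloor> \<le> y a \<and> y a \<le> of_int \<lfloor>x a\<rfloor> + 1"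
        and yint: "\<exists>a\<in>G. y a \<in> \<int>" for y s
    proof -
      have yx: "y a = x a" if "a \<notin> G" for a using d0[OF that] ydef by simp
      obtain a1 where a1: "a1 \<in> G" "y a1 \<in> \<int>" using yint by auto
      have sub: "{a\<in>A. y a \<notin> \<int>} \<subset> F"
      proof
        show "{a\<in>A. y a \<notin> \<int>} \<subseteq> F"
        proof
          fix a assume "a \<in> {a\<in>A. y a \<notin> \<int>}"
          then show "a \<in> F" using yx GF by (cases "a \<in> G") (auto simp: F_def)
        qed
        show "{a\<in>A. y a \<notin> \<int>} \<noteq> F" using a1 GF by auto
      qed
      have cl: "card {a\<in>A. y a \<notin> \<int>} < n"
        using psubset_card_mono[OF fF sub] less.prems(1) by (simp add: F_def)
      have yb: "\<forall>a\<in>A. of_int (lo a) \<le> y a \<and> y a \<le> of_int (hi a)"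
      proof
        fix a assume aA: "a \<in> A"
        show "of_int (lo a) \<le> y a \<and> y a \<le> of_int (hi a)"
        proof (cases "a \<in> G")
          case True
          have b: "of_int (lo a) \<le> x a" "x a \<le> of_int (hi a)" using less.prems(2) aA by auto
          have "lo a \<le> \<lfloor>x a\<rfloor>" using b(1) by (simp add: le_floor_iff)
          moreover have "\<lceil>x a\<rceil> \<le> hi a" using b(2) by (simp add: ceiling_le_iff)
          moreover have "of_int \<lceil>x a\<rceil> = of_int \<lfloor>x a\<rfloor> + (1::real)" using frac True GF by auto
          ultimately show ?thesis using ybox True
            by (smt (verit) of_int_le_iff)
        next
          case False
          then show ?thesis using yx less.prems(2) aA by auto
        qed
      qed
      have yn: "\<forall>v. v \<noteq> r \<longrightarrow> net A hh tt y v = net A hh tt x v"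
        using dnet net_lin[OF fA, of hh tt x s d] ydef by simp
      have yni: "\<forall>v. v \<noteq> r \<longrightarrow> net A hh tt y v \<in> \<int>" using yn less.prems(3) by simp
      from less.IH[OF cl refl yb yni] obtain x' where
        x': "\<forall>a\<in>A. x' a \<in> \<int> \<and> of_int (lo a) \<le> x' a \<and> x' a \<le> of_int (hi a)"
          "\<forall>v. v \<noteq> r \<longrightarrow> net A hh tt x' v = net A hh tt y v"
          "(\<Sum>a\<in>A. c a (x' a)) \<le> (\<Sum>a\<in>A. c a (y a))" by blast
      show ?thesis using x' yn by (intro exI[of _ x']) auto
    qed
    have pc: "\<exists>x'. (\<forall>a\<in>A. x' a \<in> \<int> \<and> of_int (lo a) \<le> x' a \<and> x' a \<le> of_int (hi a))
       \<and> (\<forall>v. v \<noteq> r \<longrightarrow> net A hh tt x' v = net A hh tt x v)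
       \<and> (\<Sum>a\<in>A. c a (x' a)) \<le> (\<Sum>a\<in>A. c a (p a))"
      by (rule cand[of p s1]) (use pbox pint in \<open>auto simp: p_def[abs_def]\<close>)
    have qc: "\<exists>x'. (\<forall>a\<in>A. x' a \<in> \<int> \<and> of_int (lo a) \<le> x' a \<and> x' a \<le> of_int (hi a))
       \<and> (\<forall>v. v \<noteq> r \<longrightarrow> net A hh tt x' v = net A hh tt x v)
       \<and> (\<Sum>a\<in>A. c a (x' a)) \<le> (\<Sum>a\<in>A. c a (q a))"
      by (rule cand[of q "- s2"]) (use qbox qint in \<open>auto simp: q_def[abs_def]\<close>)
    define u where "u = s2 / (s1 + s2)"
    have u: "0 \<le> u" "u \<le> 1" using s1(1) s2(1) by (auto simp: u_def)
    have xcomb: "x a = u * p a + (1 - u) * q a" for a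
    proof -
      have "1 - u = s1 / (s1 + s2)" using s1(1) s2(1) by (simp add: u_def field_simps)
      then have z: "u * s1 - (1 - u) * s2 = 0" by (simp add: u_def)
      have "u * p a + (1 - u) * q a = x a + (u * s1 - (1 - u) * s2) * d a"
        by (simp add: p_def q_def algebra_simps)
      then show ?thesis using z by simp
    qed
    have ccomb: "c a (x a) = u * c a (p a) + (1 - u) * c a (q a)" if "a \<in> A" for a
    proof (cases "a \<in> G")
      case True
      have "affine_int (c a)" using aff that by simp
      then show ?thesis unfolding affine_int_def xcomb[of a]
        using pbox[OF True] qbox[OF True] u by blast
    next
      case False
      then show ?thesis using d0[OF False] by (simp add: p_def q_def algebra_simps)
    qed
    have "(\<Sum>a\<in>A. c a (x a)) = u * (\<Sum>a\<in>A. c a (p a)) + (1 - u) * (\<Sum>a\<in>A. c a (q a))"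
      using ccomb by (simp add: sum_distrib_left sum.distrib)
    then have "(\<Sum>a\<in>A. c a (p a)) \<le> (\<Sum>a\<in>A. c a (x a)) \<or> (\<Sum>a\<in>A. c a (q a)) \<le> (\<Sum>a\<in>A. c a (x a))"
      using u by (intro convex_min_le) auto
    then show ?thesis using pc qc by (meson order_trans)
  qed
qed



definition Dom :: "nat \<Rightarrow> nat \<Rightarrow> ('n\<times>'n) set \<Rightarrow> (int \<times> nat \<times> ('n \<times> 'n)) set" where
  "Dom T K E = {1..int T} \<times> {0..K} \<times> E"

definition Arcs :: "'n set \<Rightarrow> ('n\<times>'n) set \<Rightarrow> nat \<Rightarrow> nat \<Rightarrow> ((int \<times> nat \<times> ('n \<times> 'n)) + ('n \<times> int)) set" where
  "Arcs N E T K = Inl ` Dom T K E \<union> Inr ` (N \<times> {1..int T})"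

definition hdA :: "nat \<Rightarrow> (int \<times> nat \<times> ('n \<times> 'n)) + ('n \<times> int) \<Rightarrow> ('n \<times> int) option" where
  "hdA T a = (case a of Inl (t,k,e) \<Rightarrow> if t + int k \<le> int T then Some (snd e, t + int k) else None
                       | Inr (i,t) \<Rightarrow> if t < int T then Some (i, t+1) else None)"

definition tlA :: "(int \<times> nat \<times> ('n \<times> 'n)) + ('n \<times> int) \<Rightarrow> ('n \<times> int) option" where
  "tlA a = (case a of Inl (t,k,e) \<Rightarrow> Some (fst e, t) | Inr (i,t) \<Rightarrow> Some (i,t))"

definition Phi :: "('n\<times>'n) set \<Rightarrow> nat \<Rightarrow> (int \<Rightarrow> nat \<Rightarrow> 'n\<times>'n \<Rightarrow> real) \<Rightarrow> 'n \<Rightarrow> int \<Rightarrow> real" where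
  "Phi E K w i t = (\<Sum>k\<in>{0..K}. (if 1 \<le> t - int k then (\<Sum>j\<in>{j. (j,i)\<in>E}. w (t - int k) k (j,i)) else 0)
       - (\<Sum>j\<in>{j. (i,j)\<in>E}. w t k (i,j)))"

lemma finE: "finite N \<Longrightarrow> E \<subseteq> N \<times> N \<Longrightarrow> finite E"
  by (meson finite_SigmaI finite_subset)

lemma fin_in: "finite E \<Longrightarrow> finite {j. (j,i)\<in>E}"
  by (rule finite_subset[of _ "fst ` E"]) force+

lemma fin_out: "finite E \<Longrightarrow> finite {j. (i,j)\<in>E}"
  by (rule finite_subset[of _ "snd ` E"]) force+

lemma fin_Dom: "finite E \<Longrightarrow> finite (Dom T K E)"
  by (simp add: Dom_def)

lemma fin_Arcs: "finite N \<Longrightarrow> finite E \<Longrightarrow> finite (Arcs N E T K)"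
  by (simp add: Arcs_def fin_Dom)

lemma head_set:
  assumes "i \<in> N" "1 \<le> t" "t \<le> int T" "E \<subseteq> N \<times> N"
  shows "{a\<in>Arcs N E T K. hdA T a = Some (i,t)} =
    Inl ` ((\<lambda>(k,j). (t - int k, k, (j,i))) ` ({k\<in>{0..K}. 1 \<le> t - int k} \<times> {j. (j,i)\<in>E}))
    \<union> Inr ` (if 2 \<le> t then {(i,t-1)} else {})"
proof (rule set_eqI)
  fix a
  show "a \<in> {a\<in>Arcs N E T K. hdA T a = Some (i,t)} \<longleftrightarrow> a \<in> Inl ` ((\<lambda>(k,j). (t - int k, k, (j,i))) ` ({k\<in>{0..K}. 1 \<le> t - int k} \<times> {j. (j,i)\<in>E}))
    \<union> Inr ` (if 2 \<le> t then {(i,t-1)} else {})"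
  proof (cases a)
    case (Inl b)
    obtain tau k j i' where b: "b = (tau,k,(j,i'))" by (metis prod.exhaust)
    show ?thesis
    proof
      assume "a \<in> {a\<in>Arcs N E T K. hdA T a = Some (i,t)}"
      then have "tau \<in> {1..int T}" "k \<le> K" "(j,i') \<in> E" "i' = i" "tau + int k = t"
        using Inl b by (auto simp: Arcs_def Dom_def hdA_def split: if_splits)
      then show "a \<in> Inl ` ((\<lambda>(k,j). (t - int k, k, (j,i))) ` ({k\<in>{0..K}. 1 \<le> t - int k} \<times> {j. (j,i)\<in>E}))
        \<union> Inr ` (if 2 \<le> t then {(i,t-1)} else {})"
        using Inl b by (auto intro!: image_eqI[of _ _ "(k,j)"])
    next
      assume "a \<in> Inl ` ((\<lambda>(k,j). (t - int k, k, (j,i))) ` ({k\<in>{0..K}. 1 \<le> t - int k} \<times> {j. (j,i)\<in>E}))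
        \<union> Inr ` (if 2 \<le> t then {(i,t-1)} else {})"
      then show "a \<in> {a\<in>Arcs N E T K. hdA T a = Some (i,t)}"
        using Inl b assms by (auto simp: Arcs_def Dom_def hdA_def split: if_splits)
    qed
  next
    case (Inr b)
    obtain i' tau where b: "b = (i',tau)" by (metis prod.exhaust)
    show ?thesis
      using Inr b assms by (auto simp: Arcs_def Dom_def hdA_def split: if_splits)
  qed
qed

lemma tail_set:
  assumes "i \<in> N" "1 \<le> t" "t \<le> int T" "E \<subseteq> N \<times> N"
  shows "{a\<in>Arcs N E T K. tlA a = Some (i,t)} =
    Inl ` ((\<lambda>(k,j). (t, k, (i,j))) ` ({0..K} \<times> {j. (i,j)\<in>E})) \<union> {Inr (i,t)}"
proof (rule set_eqI)
  fix a
  show "a \<in> {a\<in>Arcs N E T K. tlA a = Some (i,t)} \<longleftrightarrow> a \<in> Inl ` ((\<lambda>(k,j). (t, k, (i,j))) ` ({0..K} \<times> {j. (i,j)\<in>E})) \<union> {Inr (i,t)}"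
  proof (cases a)
    case (Inl b)
    obtain tau k i' j where b: "b = (tau,k,(i',j))" by (metis prod.exhaust)
    show ?thesis
    proof
      assume "a \<in> {a\<in>Arcs N E T K. tlA a = Some (i,t)}"
      then have "k \<le> K" "(i',j) \<in> E" "i' = i" "tau = t"
        using Inl b by (auto simp: Arcs_def Dom_def tlA_def)
      then show "a \<in> Inl ` ((\<lambda>(k,j). (t, k, (i,j))) ` ({0..K} \<times> {j. (i,j)\<in>E})) \<union> {Inr (i,t)}"
        using Inl b by (auto intro!: image_eqI[of _ _ "(k,j)"])
    next
      assume "a \<in> Inl ` ((\<lambda>(k,j). (t, k, (i,j))) ` ({0..K} \<times> {j. (i,j)\<in>E})) \<union> {Inr (i,t)}"
      then show "a \<in> {a\<in>Arcs N E T K. tlA a = Some (i,t)}"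
        using Inl b assms by (auto simp: Arcs_def Dom_def tlA_def)
    qed
  next
    case (Inr b)
    obtain i' tau where b: "b = (i',tau)" by (metis prod.exhaust)
    show ?thesis
      using Inr b assms by (auto simp: Arcs_def Dom_def tlA_def)
  qed
qed

lemma net_formula:
  fixes N :: "'n set"
  assumes "finite N" "E \<subseteq> N \<times> N" "i \<in> N" "1 \<le> t" "t \<le> int T"
  shows "net (Arcs N E T K) (hdA T) tlA z (Some (i,t)) = Phi E K (\<lambda>t k e. z (Inl (t,k,e))) i t
     + (if 2 \<le> t then z (Inr (i,t-1)) else 0) - z (Inr (i,t))"
proof -
  have fE: "finite E" using finE assms by blast
  define S1 where "S1 = {k\<in>{0..K}. 1 \<le> t - int k} \<times> {j. (j,i)\<in>E}"
  define g1 where "g1 = (\<lambda>(k::nat,j::'n). (t - int k, k, (j,i)))"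
  have inj1: "inj_on g1 S1" by (auto simp: inj_on_def g1_def)
  have fS1: "finite S1" using fin_in[OF fE] by (simp add: S1_def)
  define S2 where "S2 = {0..K} \<times> {j. (i,j)\<in>E}"
  define g2 where "g2 = (\<lambda>(k::nat,j::'n). (t, k, (i,j)))"
  have inj2: "inj_on g2 S2" by (auto simp: inj_on_def g2_def)
  have fS2: "finite S2" using fin_out[OF fE] by (simp add: S2_def)
  have H: "(\<Sum>a\<in>{a\<in>Arcs N E T K. hdA T a = Some (i,t)}. z a) =
     (\<Sum>k\<in>{0..K}. if 1 \<le> t - int k then (\<Sum>j\<in>{j. (j,i)\<in>E}. z (Inl (t - int k, k, (j,i)))) else 0)
     + (if 2 \<le> t then z (Inr (i,t-1)) else 0)"
  proof -
    have "(\<Sum>a\<in>{a\<in>Arcs N E T K. hdA T a = Some (i,t)}. z a) = (\<Sum>a\<in>Inl ` (g1 ` S1). z a)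
       + (\<Sum>a\<in>Inr ` (if 2 \<le> t then {(i,t-1)} else {}). z a)"
      unfolding head_set[OF assms(3-5,2)] g1_def[symmetric] S1_def[symmetric]
      by (rule sum.union_disjoint) (auto simp: fS1)
    also have "(\<Sum>a\<in>Inl ` (g1 ` S1). z a) = (\<Sum>p\<in>S1. z (Inl (g1 p)))"
      by (simp add: sum.reindex inj1)
    also have "\<dots> = (\<Sum>k\<in>{k\<in>{0..K}. 1 \<le> t - int k}. \<Sum>j\<in>{j. (j,i)\<in>E}. z (Inl (t - int k, k, (j,i))))"
      unfolding S1_def g1_def by (simp add: sum.cartesian_product split_def)
    also have "\<dots> = (\<Sum>k\<in>{0..K}. if 1 \<le> t - int k then (\<Sum>j\<in>{j. (j,i)\<in>E}. z (Inl (t - int k, k, (j,i)))) else 0)"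
      by (rule sum.inter_filter) simp
    also have "(\<Sum>a\<in>Inr ` (if 2 \<le> t then {(i,t-1)} else {}). z a) = (if 2 \<le> t then z (Inr (i,t-1)) else 0)"
      by simp
    finally show ?thesis .
  qed
  have Tl: "(\<Sum>a\<in>{a\<in>Arcs N E T K. tlA a = Some (i,t)}. z a) =
     (\<Sum>k\<in>{0..K}. \<Sum>j\<in>{j. (i,j)\<in>E}. z (Inl (t, k, (i,j)))) + z (Inr (i,t))"
  proof -
    have "(\<Sum>a\<in>{a\<in>Arcs N E T K. tlA a = Some (i,t)}. z a) = (\<Sum>a\<in>Inl ` (g2 ` S2). z a) + (\<Sum>a\<in>{Inr (i,t)}. z a)"
      unfolding tail_set[OF assms(3-5,2)] g2_def[symmetric] S2_def[symmetric]
      by (rule sum.union_disjoint) (auto simp: fS2)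
    also have "(\<Sum>a\<in>Inl ` (g2 ` S2). z a) = (\<Sum>p\<in>S2. z (Inl (g2 p)))"
      by (simp add: sum.reindex inj2)
    also have "\<dots> = (\<Sum>k\<in>{0..K}. \<Sum>j\<in>{j. (i,j)\<in>E}. z (Inl (t, k, (i,j))))"
      unfolding S2_def g2_def by (simp add: sum.cartesian_product split_def)
    finally show ?thesis by simp
  qed
  show ?thesis unfolding net_def H Tl Phi_def sum_subtractf by simp
qed



definition Bc :: "('n\<times>'n) set \<Rightarrow> nat \<Rightarrow> ('n \<Rightarrow> int \<Rightarrow> int) \<Rightarrow> ('n \<Rightarrow> int \<Rightarrow> int)
   \<Rightarrow> (int \<Rightarrow> nat \<Rightarrow> 'n \<times> 'n \<Rightarrow> int) \<Rightarrow> 'n \<Rightarrow> int \<Rightarrow> real" where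
  "Bc E K yplus yminus w0 i t = (\<Sum>k\<in>{0..K}. if 1 \<le> t - int k then 0
      else (\<Sum>j\<in>{j. (j,i)\<in>E}. real_of_int (w0 (t - int k) k (j,i))))
      + real_of_int (yminus i t) - real_of_int (yplus i t)"

lemma Bc_int: "Bc E K yplus yminus w0 i t \<in> \<int>"
  unfolding Bc_def by (intro Ints_add Ints_diff Ints_sum) auto

lemma fill0: "fill_level E K d0 yplus yminus w0 w i 0 = real_of_int (d0 i)"
  by (simp add: fill_level_def)

lemma fill_step:
  assumes "1 \<le> t"
  shows "fill_level E K d0 yplus yminus w0 w i t = fill_level E K d0 yplus yminus w0 w i (t - 1)
     + Phi E K w i t + Bc E K yplus yminus w0 i t"
proof -
  have iv: "{1..t} = insert t {1..t-1}" using assms by auto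
  have jr: "(\<Sum>j\<in>{j. (j,i)\<in>E}. journey w0 w (t - int k) k (j,i)) =
     (if 1 \<le> t - int k then (\<Sum>j\<in>{j. (j,i)\<in>E}. w (t - int k) k (j,i)) else 0)
     + (if 1 \<le> t - int k then 0 else (\<Sum>j\<in>{j. (j,i)\<in>E}. real_of_int (w0 (t - int k) k (j,i))))" for k
    by (simp add: journey_def)
  have "(\<Sum>k\<in>{0..K}. (\<Sum>j\<in>{j. (j,i)\<in>E}. journey w0 w (t - int k) k (j,i)) - (\<Sum>j\<in>{j. (i,j)\<in>E}. w t k (i,j)))
     + real_of_int (yminus i t) - real_of_int (yplus i t) = Phi E K w i t + Bc E K yplus yminus w0 i t"
    unfolding jr Phi_def Bc_def by (simp add: sum.distrib sum_subtractf algebra_simps)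
  then show ?thesis
    unfolding fill_level_def iv by (subst sum.insert) auto
qed

lemma Phi_cong:
  assumes "\<forall>\<tau> k e. (\<tau>,k,e) \<in> Dom T K E \<longrightarrow> w1 \<tau> k e = w2 \<tau> k e" "1 \<le> t" "t \<le> int T"
  shows "Phi E K w1 i t = Phi E K w2 i t"
  unfolding Phi_def
proof (intro sum.cong refl arg_cong2[where f = "(-)"] if_cong)
  fix k j assume "k \<in> {0..K}" "1 \<le> t - int k" "j \<in> {j. (j,i)\<in>E}"
  then show "w1 (t - int k) k (j,i) = w2 (t - int k) k (j,i)" using assms by (auto simp: Dom_def)
next
  fix k j assume "k \<in> {0..K}" "j \<in> {j. (i,j)\<in>E}"
  then show "w1 t k (i,j) = w2 t k (i,j)" using assms by (auto simp: Dom_def)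
qed

definition xw where
  "xw E K d0 yplus yminus w0 w a = (case a of Inl (t,k,e) \<Rightarrow> w t k e
      | Inr (i,t) \<Rightarrow> fill_level E K d0 yplus yminus w0 w i t)"

lemma net_xw:
  fixes N :: "'n set"
  assumes "finite N" "E \<subseteq> N \<times> N" "i \<in> N" "1 \<le> t" "t \<le> int T"
  shows "net (Arcs N E T K) (hdA T) tlA (xw E K d0 yplus yminus w0 w) (Some (i,t))
     = (if 2 \<le> t then 0 else - real_of_int (d0 i)) - Bc E K yplus yminus w0 i t"
proof -
  have ph: "Phi E K (\<lambda>t k e. xw E K d0 yplus yminus w0 w (Inl (t,k,e))) i t = Phi E K w i t"
    by (simp add: xw_def)
  show ?thesis
    using net_formula[OF assms, of K "xw E K d0 yplus yminus w0 w"]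
      fill_step[OF assms(4), of E K d0 yplus yminus w0 w i]
    unfolding ph
  proof (cases "2 \<le> t")
    case False
    then have "t = 1" using assms(4) by simp
    then show ?thesis using net_formula[OF assms, of K "xw E K d0 yplus yminus w0 w"]
      fill_step[OF assms(4), of E K d0 yplus yminus w0 w i] unfolding ph by (simp add: xw_def fill0)
  qed (auto simp: xw_def)
qed

lemma net_outside:
  fixes N :: "'n set"
  assumes "E \<subseteq> N \<times> N" "\<not> (i \<in> N \<and> 1 \<le> t \<and> t \<le> int T)"
  shows "net (Arcs N E T K) (hdA T) tlA z (Some (i,t)) = 0"
proof -
  have "{a\<in>Arcs N E T K. hdA T a = Some (i,t)} = {}"
    using assms by (auto simp: Arcs_def Dom_def hdA_def split: if_splits)
  moreover have "{a\<in>Arcs N E T K. tlA a = Some (i,t)} = {}"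
    using assms by (auto simp: Arcs_def Dom_def tlA_def)
  ultimately show ?thesis unfolding net_def by (metis diff_self)
qed

lemma net_int:
  fixes N :: "'n set"
  assumes "finite N" "E \<subseteq> N \<times> N" "v \<noteq> None"
  shows "net (Arcs N E T K) (hdA T) tlA (xw E K d0 yplus yminus w0 w) v \<in> \<int>"
proof -
  obtain i t where v: "v = Some (i,t)" using assms(3) by auto
  show ?thesis
  proof (cases "i \<in> N \<and> 1 \<le> t \<and> t \<le> int T")
    case True
    then show ?thesis unfolding v using net_xw[OF assms(1,2), of i t T K d0 yplus yminus w0 w] Bc_int
      by (auto intro!: Ints_diff)
  next
    case False
    then show ?thesis unfolding v using net_outside[OF assms(2) False] by simp
  qed
qed

lemma back_fill:
  fixes N :: "'n set"
  assumes "finite N" "E \<subseteq> N \<times> N" "i \<in> N"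
    and eqn: "\<forall>v. v \<noteq> None \<longrightarrow> net (Arcs N E T K) (hdA T) tlA x' v
       = net (Arcs N E T K) (hdA T) tlA (xw E K d0 yplus yminus w0 w) v"
    and w'def: "w' = (\<lambda>t k e. if (t,k,e) \<in> Dom T K E then x' (Inl (t,k,e)) else 0)"
  shows "1 \<le> m \<Longrightarrow> m \<le> T \<Longrightarrow> fill_level E K d0 yplus yminus w0 w' i (int m) = x' (Inr (i, int m))"
proof (induction m)
  case 0 then show ?case by simp
next
  case (Suc m)
  define t where "t = int (Suc m)"
  have t: "1 \<le> t" "t \<le> int T" using Suc.prems by (auto simp: t_def)
  have Ph: "Phi E K w' i t = Phi E K (\<lambda>t k e. x' (Inl (t,k,e))) i t"
    by (rule Phi_cong[OF _ t]) (simp add: w'def)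
  have n1: "net (Arcs N E T K) (hdA T) tlA x' (Some (i,t)) = Phi E K (\<lambda>t k e. x' (Inl (t,k,e))) i t
     + (if 2 \<le> t then x' (Inr (i,t-1)) else 0) - x' (Inr (i,t))"
    by (rule net_formula[OF assms(1-3) t])
  have n2: "net (Arcs N E T K) (hdA T) tlA x' (Some (i,t))
     = (if 2 \<le> t then 0 else - real_of_int (d0 i)) - Bc E K yplus yminus w0 i t"
    using eqn net_xw[OF assms(1-3) t, of K d0 yplus yminus w0 w] by simp
  have fs: "fill_level E K d0 yplus yminus w0 w' i t = fill_level E K d0 yplus yminus w0 w' i (t - 1)
     + Phi E K w' i t + Bc E K yplus yminus w0 i t"
    by (rule fill_step[OF t(1)])
  have "fill_level E K d0 yplus yminus w0 w' i t = x' (Inr (i, t))"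
  proof (cases "m = 0")
    case True
    then have "t = 1" by (simp add: t_def)
    then show ?thesis using n1 n2 fs Ph by (simp add: fill0)
  next
    case False
    then have ih: "fill_level E K d0 yplus yminus w0 w' i (int m) = x' (Inr (i, int m))"
      using Suc by simp
    have "t - 1 = int m" "2 \<le> t" using False by (auto simp: t_def)
    then show ?thesis using n1 n2 fs Ph ih by simp
  qed
  then show ?case by (simp add: t_def)
qed



definition cc :: "(int \<Rightarrow> nat \<Rightarrow> 'n \<times> 'n \<Rightarrow> real \<Rightarrow> real) \<Rightarrow> (int \<Rightarrow> nat \<Rightarrow> 'n \<times> 'n \<Rightarrow> nat)
   \<Rightarrow> (int \<times> nat \<times> ('n \<times> 'n)) + ('n \<times> int) \<Rightarrow> real \<Rightarrow> real" where
  "cc l f a = (case a of Inl (t,k,e) \<Rightarrow> (\<lambda>y. l t k e (real (f t k e) - y)) | Inr _ \<Rightarrow> (\<lambda>_. 0))"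

lemma objective_arcs:
  fixes N :: "'n set"
  assumes "finite N" "E \<subseteq> N \<times> N" "\<forall>t k e. (t,k,e) \<in> Dom T K E \<longrightarrow> z (Inl (t,k,e)) = v t k e"
  shows "(\<Sum>a\<in>Arcs N E T K. cc l f a (z a)) = objective E T K l f v"
proof -
  have fE: "finite E" using finE assms by blast
  have "(\<Sum>a\<in>Arcs N E T K. cc l f a (z a)) = (\<Sum>a\<in>Inl ` Dom T K E. cc l f a (z a))
      + (\<Sum>a\<in>Inr ` (N \<times> {1..int T}). cc l f a (z a))"
    unfolding Arcs_def by (rule sum.union_disjoint) (auto simp: fin_Dom fE assms(1))
  also have "(\<Sum>a\<in>Inr ` (N \<times> {1..int T}). cc l f a (z a)) = 0"
    by (rule sum.neutral) (auto simp: cc_def)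
  also have "(\<Sum>a\<in>Inl ` Dom T K E. cc l f a (z a)) = (\<Sum>p\<in>Dom T K E. cc l f (Inl p) (z (Inl p)))"
    by (simp add: sum.reindex)
  also have "\<dots> = (\<Sum>p\<in>Dom T K E. l (fst p) (fst (snd p)) (snd (snd p))
        (real (f (fst p) (fst (snd p)) (snd (snd p))) - v (fst p) (fst (snd p)) (snd (snd p))))"
    by (rule sum.cong) (use assms(3) in \<open>auto simp: cc_def\<close>)
  also have "\<dots> = (\<Sum>t\<in>{1..int T}. \<Sum>k\<in>{0..K}. \<Sum>e\<in>E. l t k e (real (f t k e) - v t k e))"
    unfolding Dom_def by (simp add: sum.cartesian_product split_def)
  also have "\<dots> = objective E T K l f v"
    unfolding objective_def by (intro sum.cong refl) (rule sum.swap)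
  finally show ?thesis by simp
qed

lemma cvx_affine:
  assumes "cvx_pwa_int g"
  shows "affine_int (\<lambda>y. g (real F - y))"
  unfolding affine_int_def
proof (intro allI impI)
  fix n :: int and x y u :: real
  assume h: "of_int n \<le> x \<and> x \<le> of_int n + 1 \<and> of_int n \<le> y \<and> y \<le> of_int n + 1 \<and> 0 \<le> u \<and> u \<le> 1"
  define m where "m = int F - n - 1"
  define Dl where "Dl = g (real_of_int m + 1) - g (real_of_int m)"
  have L: "g z = g (real_of_int m) + (z - real_of_int m) * Dl" if "real_of_int m \<le> z" "z \<le> real_of_int m + 1" for z
    using assms that unfolding cvx_pwa_int_def Dl_def by blast
  have mm: "real_of_int m = real F - of_int n - 1" by (simp add: m_def)
  define z1 where "z1 = real F - x"
  define z2 where "z2 = real F - y"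
  have b1: "real_of_int m \<le> z1" "z1 \<le> real_of_int m + 1" using h mm by (auto simp: z1_def)
  have b2: "real_of_int m \<le> z2" "z2 \<le> real_of_int m + 1" using h mm by (auto simp: z2_def)
  have comb: "real F - (u * x + (1 - u) * y) = u * z1 + (1 - u) * z2"
    by (simp add: z1_def z2_def algebra_simps)
  have u: "0 \<le> u" "0 \<le> 1 - u" using h by auto
  have "u * real_of_int m \<le> u * z1" "(1 - u) * real_of_int m \<le> (1 - u) * z2"
    using mult_left_mono[OF b1(1) u(1)] mult_left_mono[OF b2(1) u(2)] by auto
  then have b3: "real_of_int m \<le> u * z1 + (1 - u) * z2" by (simp add: algebra_simps)
  have "u * z1 \<le> u * (real_of_int m + 1)" "(1 - u) * z2 \<le> (1 - u) * (real_of_int m + 1)"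
    using mult_left_mono[OF b1(2) u(1)] mult_left_mono[OF b2(2) u(2)] by auto
  then have b4: "u * z1 + (1 - u) * z2 \<le> real_of_int m + 1" by (simp add: algebra_simps)
  show "g (real F - (u * x + (1 - u) * y)) = u * g (real F - x) + (1 - u) * g (real F - y)"
    unfolding comb z1_def[symmetric] z2_def[symmetric] L[OF b3 b4] L[OF b1] L[OF b2]
    by (simp add: algebra_simps)
qed

lemma round_concrete:
  fixes N :: "'n set" and E :: "('n \<times> 'n) set" and T K :: nat
    and d0 dbar :: "'n \<Rightarrow> int"
    and yplus yminus :: "'n \<Rightarrow> int \<Rightarrow> int"
    and f :: "int \<Rightarrow> nat \<Rightarrow> 'n \<times> 'n \<Rightarrow> nat"
    and w0 :: "int \<Rightarrow> nat \<Rightarrow> 'n \<times> 'n \<Rightarrow> int"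
    and l :: "int \<Rightarrow> nat \<Rightarrow> 'n \<times> 'n \<Rightarrow> real \<Rightarrow> real"
  assumes fN: "finite N" and EN: "E \<subseteq> N \<times> N" and cv: "\<And>t k e. cvx_pwa_int (l t k e)"
    and feas: "feasible_relaxed N E T K d0 dbar yplus yminus f w0 w"
  shows "\<exists>w'. feasible_relaxed N E T K d0 dbar yplus yminus f w0 w'
     \<and> (\<forall>t k e. (t,k,e) \<in> Dom T K E \<longrightarrow> w' t k e \<in> \<int>)
     \<and> (\<forall>t k e. (t,k,e) \<notin> Dom T K E \<longrightarrow> w' t k e = 0)
     \<and> objective E T K l f w' \<le> objective E T K l f w"
proof -
  have fE: "finite E" using finE fN EN by blast
  have fA: "finite (Arcs N E T K)" using fin_Arcs[OF fN fE] .
  define x where "x = xw E K d0 yplus yminus w0 w"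
  define lo :: "(int \<times> nat \<times> ('n \<times> 'n)) + ('n \<times> int) \<Rightarrow> int" where "lo = (\<lambda>_. 0)"
  define hi :: "(int \<times> nat \<times> ('n \<times> 'n)) + ('n \<times> int) \<Rightarrow> int"
    where "hi a = (case a of Inl (t,k,e) \<Rightarrow> int (f t k e) | Inr (i,t) \<Rightarrow> dbar i)" for a
  have bnd: "\<forall>a\<in>Arcs N E T K. of_int (lo a) \<le> x a \<and> x a \<le> of_int (hi a)"
    using feas by (auto simp: Arcs_def Dom_def x_def xw_def lo_def hi_def feasible_relaxed_def)
  have nint: "\<forall>v. v \<noteq> None \<longrightarrow> net (Arcs N E T K) (hdA T) tlA x v \<in> \<int>"
    using net_int[OF fN EN] unfolding x_def by blast
  have aff: "\<forall>a\<in>Arcs N E T K. affine_int (cc l f a)"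
  proof
    fix a assume "a \<in> Arcs N E T K"
    show "affine_int (cc l f a)"
    proof (cases a)
      case (Inl b)
      then show ?thesis using cvx_affine[OF cv] by (auto simp: cc_def split: prod.splits)
    next
      case (Inr b)
      then show ?thesis by (auto simp: cc_def affine_int_def split: prod.splits)
    qed
  qed
  obtain x' where x':
    "\<forall>a\<in>Arcs N E T K. x' a \<in> \<int> \<and> of_int (lo a) \<le> x' a \<and> x' a \<le> of_int (hi a)"
    "\<forall>v. v \<noteq> None \<longrightarrow> net (Arcs N E T K) (hdA T) tlA x' v = net (Arcs N E T K) (hdA T) tlA x v"
    "(\<Sum>a\<in>Arcs N E T K. cc l f a (x' a)) \<le> (\<Sum>a\<in>Arcs N E T K. cc l f a (x a))"
    using rounding_n[OF refl fA bnd nint aff] by blast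
  define w' where "w' = (\<lambda>t k e. if (t,k,e) \<in> Dom T K E then x' (Inl (t,k,e)) else 0)"
  have fl: "fill_level E K d0 yplus yminus w0 w' i t = x' (Inr (i,t))" if "i \<in> N" "t \<in> {1..int T}" for i t
  proof -
    have "fill_level E K d0 yplus yminus w0 w' i (int (nat t)) = x' (Inr (i, int (nat t)))"
      using back_fill[OF fN EN that(1) x'(2)[unfolded x_def] w'_def, of "nat t"] that(2) by auto
    then show ?thesis using that(2) by simp
  qed
  have feas': "feasible_relaxed N E T K d0 dbar yplus yminus f w0 w'"
    unfolding feasible_relaxed_def
  proof (intro conjI ballI)
    fix t i assume "t \<in> {1..int T}" "i \<in> N"
    moreover have "Inr (i,t) \<in> Arcs N E T K" using calculation by (auto simp: Arcs_def)
    ultimately show "0 \<le> fill_level E K d0 yplus yminus w0 w' i t"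
      "fill_level E K d0 yplus yminus w0 w' i t \<le> real_of_int (dbar i)"
      using x'(1) fl by (auto simp: lo_def hi_def)
  next
    fix t k e assume "t \<in> {1..int T}" "k \<in> {0..K}" "e \<in> E"
    moreover have "(t,k,e) \<in> Dom T K E" using calculation by (auto simp: Dom_def)
    moreover have "Inl (t,k,e) \<in> Arcs N E T K" using calculation by (auto simp: Arcs_def)
    ultimately show "0 \<le> w' t k e" "w' t k e \<le> real (f t k e)"
      using x'(1) by (auto simp: w'_def lo_def hi_def)
  qed
  have o1: "(\<Sum>a\<in>Arcs N E T K. cc l f a (x' a)) = objective E T K l f w'"
    by (rule objective_arcs[OF fN EN]) (simp add: w'_def)
  have o2: "(\<Sum>a\<in>Arcs N E T K. cc l f a (x a)) = objective E T K l f w"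
    by (rule objective_arcs[OF fN EN]) (simp add: x_def xw_def)
  have ints: "\<forall>t k e. (t,k,e) \<in> Dom T K E \<longrightarrow> w' t k e \<in> \<int>"
  proof (intro allI impI)
    fix t k e assume "(t,k,e) \<in> Dom T K E"
    moreover then have "Inl (t,k,e) \<in> Arcs N E T K" by (auto simp: Arcs_def)
    ultimately show "w' t k e \<in> \<int>" using x'(1) by (auto simp: w'_def)
  qed
  show ?thesis
    using feas' ints x'(3) o1 o2 by (intro exI[of _ w']) (auto simp: w'_def)
qed



theorem proposition1:
  fixes N :: "'n set" and E :: "('n \<times> 'n) set" and T K :: nat
    and d0 dbar :: "'n \<Rightarrow> int"
    and yplus yminus :: "'n \<Rightarrow> int \<Rightarrow> int"
    and f :: "int \<Rightarrow> nat \<Rightarrow> 'n \<times> 'n \<Rightarrow> nat"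
    and w0 :: "int \<Rightarrow> nat \<Rightarrow> 'n \<times> 'n \<Rightarrow> int"
    and l :: "int \<Rightarrow> nat \<Rightarrow> 'n \<times> 'n \<Rightarrow> real \<Rightarrow> real"
  assumes "finite N" and "E \<subseteq> N \<times> N"
    and "\<And>t k e. cvx_pwa_int (l t k e)"
    and "\<exists>w. feasible_relaxed N E T K d0 dbar yplus yminus f w0 w"
  shows "\<exists>w. feasible_relaxed N E T K d0 dbar yplus yminus f w0 w
           \<and> (\<forall>t\<in>{1..int T}. \<forall>k\<in>{0..K}. \<forall>e\<in>E. w t k e \<in> \<int>)
           \<and> (\<forall>w'. feasible_relaxed N E T K d0 dbar yplus yminus f w0 w'
                   \<longrightarrow> objective E T K l f w \<le> objective E T K l f w')"
proof -
  obtain w1 where w1: "feasible_relaxed N E T K d0 dbar yplus yminus f w0 w1" using assms(4) by blast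
  have fE: "finite E" using finE assms(1,2) by blast
  define D where "D = Dom T K E"
  have fD: "finite D" using fin_Dom[OF fE] by (simp add: D_def)
  define M where "M = (\<Sum>p\<in>D. f (fst p) (fst (snd p)) (snd (snd p)))"
  define V where "V = real ` {0..M}"
  define emb where "emb p = (\<lambda>t k e. if (t,k,e) \<in> D then p (t,k,e) else (0::real))"
    for p :: "int \<times> nat \<times> ('n \<times> 'n) \<Rightarrow> real"
  define C where "C = {w \<in> emb ` (PiE D (\<lambda>_. V)). feasible_relaxed N E T K d0 dbar yplus yminus f w0 w}"
  have finC: "finite C"
  proof -
    have "finite (PiE D (\<lambda>_. V))" using fD by (intro finite_PiE) (auto simp: V_def)
    then show ?thesis unfolding C_def by simp
  qed
  have good: "\<exists>w'\<in>C. objective E T K l f w' \<le> objective E T K l f w"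
    if fw: "feasible_relaxed N E T K d0 dbar yplus yminus f w0 w" for w
  proof -
    obtain w' where w': "feasible_relaxed N E T K d0 dbar yplus yminus f w0 w'"
      "\<forall>t k e. (t,k,e) \<in> D \<longrightarrow> w' t k e \<in> \<int>"
      "\<forall>t k e. (t,k,e) \<notin> D \<longrightarrow> w' t k e = 0"
      "objective E T K l f w' \<le> objective E T K l f w"
      using round_concrete[where l=l, OF assms(1,2,3) fw] unfolding D_def by blast
    define p where "p = restrict (\<lambda>(t,k,e). w' t k e) D"
    have "p \<in> PiE D (\<lambda>_. V)"
    proof -
      have "w' t k e \<in> V" if "(t,k,e) \<in> D" for t k e
      proof -
        have "t \<in> {1..int T}" "k \<in> {0..K}" "e \<in> E" using that by (auto simp: D_def Dom_def)
        then have b: "0 \<le> w' t k e" "w' t k e \<le> real (f t k e)"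
          using w'(1) unfolding feasible_relaxed_def by auto
        have fM: "f t k e \<le> M" unfolding M_def
          using member_le_sum[OF that, of "\<lambda>p. f (fst p) (fst (snd p)) (snd (snd p))"] fD by simp
        have "w' t k e \<in> \<int>" using w'(2) that by blast
        then obtain z where z: "w' t k e = of_int z" by (auto elim: Ints_cases)
        have "0 \<le> z" using b z by simp
        then have "w' t k e = real (nat z)" using z by simp
        moreover have "nat z \<le> M" using b z fM \<open>0 \<le> z\<close> by linarith
        ultimately show ?thesis unfolding V_def by auto
      qed
      then show ?thesis unfolding p_def by (auto simp: PiE_iff)
    qed
    moreover have "emb p = w'"
      using w'(3) by (auto simp: emb_def p_def fun_eq_iff)
    ultimately have "w' \<in> C" unfolding C_def using w'(1) by (auto intro: image_eqI[of _ _ p])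
    then show ?thesis using w'(4) by blast
  qed
  have Cne: "C \<noteq> {}" using good[OF w1] by auto
  define m where "m = Min ((objective E T K l f) ` C)"
  have "m \<in> (objective E T K l f) ` C" unfolding m_def using finC Cne by (intro Min_in) auto
  then obtain wopt where wopt: "wopt \<in> C" "objective E T K l f wopt = m" by auto
  have minle: "objective E T K l f wopt \<le> objective E T K l f w" if "w \<in> C" for w
    using wopt(2) finC that unfolding m_def by simp
  have feasopt: "feasible_relaxed N E T K d0 dbar yplus yminus f w0 wopt" using wopt(1) by (simp add: C_def)
  have intopt: "\<forall>t\<in>{1..int T}. \<forall>k\<in>{0..K}. \<forall>e\<in>E. wopt t k e \<in> \<int>"
  proof (intro ballI)
    fix t k e assume h: "t \<in> {1..int T}" "k \<in> {0..K}" "e \<in> E"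
    then have tD: "(t,k,e) \<in> D" by (auto simp: D_def Dom_def)
    obtain p where p: "p \<in> PiE D (\<lambda>_. V)" "wopt = emb p" using wopt(1) by (auto simp: C_def)
    have "p (t,k,e) \<in> V" using p(1) tD by (auto simp: PiE_iff)
    then have "p (t,k,e) \<in> \<int>" by (auto simp: V_def)
    then show "wopt t k e \<in> \<int>" using p(2) tD by (simp add: emb_def)
  qed
  show ?thesis
  proof (intro exI[of _ wopt] conjI feasopt intopt allI impI)
    fix w' assume "feasible_relaxed N E T K d0 dbar yplus yminus f w0 w'"
    then obtain w'' where "w'' \<in> C" "objective E T K l f w'' \<le> objective E T K l f w'" using good by blast
    then show "objective E T K l f wopt \<le> objective E T K l f w'" using minle by (meson order_trans)
  qed
qed

end
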